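(* Let $k\geq 4$ and $j\geq k+2$ be integers. Then $$j+\Big\lfloor\frac{j-1}{k+1}\Big\rfloor\leq R_k^{\mathcal{CA}}(k+3,j)\leq j-1+\Big\lceil\frac{j-1}{k}\Big\rceil,$$ where $\mathcal{CA}$ is the class of cacti.
   Context: All graphs are finite and simple. For a graph $G$ and a nonnegative integer $k$, a $k$-sparse $j$-set is a set of $j$ vertices of $G$ inducing a subgraph of maximum degree at most $k$; a $k$-dense $i$-set is a set of $i$ vertices of $G$ that is $k$-sparse in the complement of $G$. For a graph class $\mathcal{G}$, $R_k^{\mathcal{G}}(i,j)$ is the smallest natural number $n$ such that every graph on $n$ vertices in $\mathcal{G}$ has either a $k$-dense $i$-set or a $k$-sparse $j$-set. A cactus is a graph (not necessarily connected) in which every block is a cycle, a single edge, or a single vertex. *)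

theory Defs
  imports Complex_Main
begin

definition simple_graph :: "'a set \<Rightarrow> 'a set set \<Rightarrow> bool" where
  "simple_graph V E \<longleftrightarrow> finite V \<and>
     E \<subseteq> {e. \<exists>u v. u \<in> V \<and> v \<in> V \<and> u \<noteq> v \<and> e = {u, v}}"

definition adj_rel :: "'a set set \<Rightarrow> ('a \<times> 'a) set" where
  "adj_rel E = {(u, v). {u, v} \<in> E \<and> u \<noteq> v}"

(* connected (the empty graph counts as connected) *)
definition connected_graph :: "'a set \<Rightarrow> 'a set set \<Rightarrow> bool" where
  "connected_graph W F \<longleftrightarrow> (\<forall>u\<in>W. \<forall>v\<in>W. (u, v) \<in> (adj_rel F)\<^sup>*)"

definition subgraph :: "'a set \<Rightarrow> 'a set set \<Rightarrow> 'a set \<Rightarrow> 'a set set \<Rightarrow> bool" where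
  "subgraph W F V E \<longleftrightarrow> W \<subseteq> V \<and> F \<subseteq> E \<and> (\<forall>e\<in>F. e \<subseteq> W)"

definition nonseparable :: "'a set \<Rightarrow> 'a set set \<Rightarrow> bool" where
  "nonseparable W F \<longleftrightarrow> W \<noteq> {} \<and> connected_graph W F \<and>
     (\<forall>v\<in>W. connected_graph (W - {v}) {e \<in> F. v \<notin> e})"

definition is_block :: "'a set \<Rightarrow> 'a set set \<Rightarrow> 'a set \<Rightarrow> 'a set set \<Rightarrow> bool" where
  "is_block V E W F \<longleftrightarrow> subgraph W F V E \<and> nonseparable W F \<and>
     (\<forall>W' F'. subgraph W' F' V E \<and> nonseparable W' F' \<and> W \<subseteq> W' \<and> F \<subseteq> F'
        \<longrightarrow> W' = W \<and> F' = F)"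

definition is_cycle_graph :: "'a set \<Rightarrow> 'a set set \<Rightarrow> bool" where
  "is_cycle_graph W F \<longleftrightarrow> (\<exists>xs. distinct xs \<and> set xs = W \<and> length xs \<ge> 3 \<and>
     F = {{xs ! i, xs ! ((i + 1) mod length xs)} | i. i < length xs})"

definition is_single_edge :: "'a set \<Rightarrow> 'a set set \<Rightarrow> bool" where
  "is_single_edge W F \<longleftrightarrow> card W = 2 \<and> F = {W}"

definition is_single_vertex :: "'a set \<Rightarrow> 'a set set \<Rightarrow> bool" where
  "is_single_vertex W F \<longleftrightarrow> card W = 1 \<and> F = {}"

definition cactus :: "'a set \<Rightarrow> 'a set set \<Rightarrow> bool" where
  "cactus V E \<longleftrightarrow> simple_graph V E \<and>
     (\<forall>W F. is_block V E W F \<longrightarrow>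
        is_cycle_graph W F \<or> is_single_edge W F \<or> is_single_vertex W F)"

definition k_sparse :: "'a set \<Rightarrow> 'a set set \<Rightarrow> nat \<Rightarrow> 'a set \<Rightarrow> bool" where
  "k_sparse V E k S \<longleftrightarrow> S \<subseteq> V \<and> (\<forall>v\<in>S. card {u \<in> S. {u, v} \<in> E} \<le> k)"

definition k_dense :: "'a set \<Rightarrow> 'a set set \<Rightarrow> nat \<Rightarrow> 'a set \<Rightarrow> bool" where
  "k_dense V E k S \<longleftrightarrow> S \<subseteq> V \<and> (\<forall>v\<in>S. card {u \<in> S. u \<noteq> v \<and> {u, v} \<notin> E} \<le> k)"

(* R_k^CA(i,j); graphs on n vertices are represented (up to isomorphism) with vertex set {..<n} *)
definition R_cactus :: "nat \<Rightarrow> nat \<Rightarrow> nat \<Rightarrow> nat" where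
  "R_cactus k i j = (LEAST n. \<forall>E :: nat set set. cactus {..<n} E \<longrightarrow>
      (\<exists>S. card S = i \<and> k_dense {..<n} E k S) \<or> (\<exists>S. card S = j \<and> k_sparse {..<n} E k S))"

end

theory Submission
  imports Defs
begin


definition good :: "'a set \<Rightarrow> 'a set set \<Rightarrow> bool" where
  "good V E \<longleftrightarrow> (\<forall>W F. subgraph W F V E \<and> nonseparable W F \<longrightarrow>
      (\<forall>v\<in>W. card {u. {u, v} \<in> F} \<le> 2))"

lemma simple_graph_finE:
  assumes "simple_graph V E" shows "finite E"
proof -
  have "E \<subseteq> Pow V" using assms unfolding simple_graph_def by auto
  moreover have "finite V" using assms unfolding simple_graph_def by auto
  ultimately show ?thesis by (meson finite_Pow_iff finite_subset)
qed

lemma block_deg: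
  assumes "is_cycle_graph W F \<or> is_single_edge W F \<or> is_single_vertex W F"
  shows "card {u. {u, v} \<in> F} \<le> 2"
  using assms
proof (elim disjE)
  assume "is_single_vertex W F" then show ?thesis unfolding is_single_vertex_def by simp
next
  assume a: "is_single_edge W F"
  then have "{u. {u, v} \<in> F} \<subseteq> W" unfolding is_single_edge_def by auto
  moreover have "card W = 2" "finite W" using a unfolding is_single_edge_def
    by auto
  ultimately show ?thesis by (metis card_mono)
next
  assume "is_cycle_graph W F"
  then obtain xs where d: "distinct xs" "set xs = W" "length xs \<ge> 3"
    and F: "F = {{xs ! i, xs ! ((i + 1) mod length xs)} | i. i < length xs}"
    unfolding is_cycle_graph_def by blast
  define L where "L = length xs"
  show ?thesis
  proof (cases "v \<in> set xs")
    case False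
    have "{u. {u, v} \<in> F} = {}"
    proof (rule ccontr)
      assume "{u. {u, v} \<in> F} \<noteq> {}"
      then obtain u i where "i < L" "{u, v} = {xs ! i, xs ! ((i + 1) mod L)}"
        using F L_def by auto
      moreover have "xs ! i \<in> set xs" "xs ! ((i + 1) mod L) \<in> set xs"
        using \<open>i < L\<close> L_def d by (auto intro!: nth_mem mod_less_divisor)
      ultimately show False using False by (metis doubleton_eq_iff insert_iff)
    qed
    then show ?thesis by simp
  next
    case True
    then obtain p where p: "p < L" "v = xs ! p" unfolding L_def by (metis in_set_conv_nth)
    have "{u. {u, v} \<in> F} \<subseteq> {xs ! ((p + 1) mod L), xs ! ((p + L - 1) mod L)}"
    proof
      fix u assume "u \<in> {u. {u, v} \<in> F}"
      then obtain i where i: "i < L" "{u, v} = {xs ! i, xs ! ((i + 1) mod L)}"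
        using F L_def by auto
      have L3: "L \<ge> 3" using d L_def by simp
      have im: "(i + 1) mod L < L" using L3 by simp
      consider "u = xs ! i" "v = xs ! ((i + 1) mod L)" | "v = xs ! i" "u = xs ! ((i + 1) mod L)"
        using i(2) by (metis doubleton_eq_iff)
      then show "u \<in> {xs ! ((p + 1) mod L), xs ! ((p + L - 1) mod L)}"
      proof cases
        case 1
        then have "(i + 1) mod L = p" using p im d(1) L_def by (simp add: nth_eq_iff_index_eq)
        then have "i = (p + L - 1) mod L"
        proof -
          assume h: "(i + 1) mod L = p"
          show ?thesis
          proof (cases "i + 1 = L")
            case True then show ?thesis using h L3 by simp
          next
            case False
            then have "(i+1) mod L = i + 1" using i(1) by simp
            then have "p = i + 1" using h by simp
            then show ?thesis using i(1) L3 by simp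
          qed
        qed
        then show ?thesis using 1 by simp
      next
        case 2
        then have "i = p" using p i d(1) L_def by (simp add: nth_eq_iff_index_eq)
        then show ?thesis using 2 by simp
      qed
    qed
    moreover have "card {xs ! ((p + 1) mod L), xs ! ((p + L - 1) mod L)} \<le> 2"
      by (simp add: card_insert_if)
    ultimately show ?thesis by (meson card_mono finite.emptyI finite.insertI le_trans)
  qed
qed

lemma cactus_good:
  assumes "cactus V E" shows "good V E"
  unfolding good_def
proof (intro allI impI ballI)
  fix W F v assume WF: "subgraph W F V E \<and> nonseparable W F" and v: "v \<in> W"
  have sg: "simple_graph V E" using assms unfolding cactus_def by simp
  have fV: "finite V" using sg unfolding simple_graph_def by simp
  have fE: "finite E" using sg by (rule simple_graph_finE)
  define P where "P = (\<lambda>(W', F'). subgraph W' F' V E \<and> nonseparable W' F' \<and> W \<subseteq> W' \<and> F \<subseteq> F')"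
  define f where "f = (\<lambda>(W' :: 'a set, F' :: 'a set set). card W' + card F')"
  have P0: "P (W, F)" using WF unfolding P_def by simp
  have bnd: "\<forall>y. P y \<longrightarrow> f y < card V + card E + 1"
  proof (intro allI impI)
    fix y assume "P y"
    then obtain W' F' where y: "y = (W', F')" "W' \<subseteq> V" "F' \<subseteq> E"
      unfolding P_def subgraph_def by auto
    then show "f y < card V + card E + 1" unfolding f_def
      using card_mono[OF fV y(2)] card_mono[OF fE y(3)] by simp
  qed
  obtain B where PB: "P B" and Bmax: "\<forall>y. P y \<longrightarrow> f y \<le> f B"
    using ex_has_greatest_nat[of P "(W, F)" f "card V + card E + 1"] P0 bnd by blast
  obtain WB FB where B: "B = (WB, FB)" by (cases B)
  have sgB: "subgraph WB FB V E" "nonseparable WB FB" "W \<subseteq> WB" "F \<subseteq> FB"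
    using PB B unfolding P_def by auto
  have fWB: "finite WB" using sgB(1) fV unfolding subgraph_def by (meson finite_subset)
  have fFB: "finite FB" using sgB(1) fE unfolding subgraph_def by (meson finite_subset)
  have blk: "is_block V E WB FB"
    unfolding is_block_def
  proof (intro conjI allI impI)
    fix W' F' assume h: "subgraph W' F' V E \<and> nonseparable W' F' \<and> WB \<subseteq> W' \<and> FB \<subseteq> F'"
    then have "P (W', F')" using sgB unfolding P_def by auto
    then have le: "card W' + card F' \<le> card WB + card FB" using Bmax B unfolding f_def by force
    have fW': "finite W'" using h fV unfolding subgraph_def by (meson finite_subset)
    have fF': "finite F'" using h fE unfolding subgraph_def by (meson finite_subset)
    have c1: "card WB \<le> card W'" using h fW' by (simp add: card_mono)
    have c2: "card FB \<le> card F'" using h fF' by (simp add: card_mono)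
    have e1: "card WB = card W'" using c1 c2 le by linarith
    have e2: "card FB = card F'" using c1 c2 le by linarith
    show "W' = WB" using card_subset_eq[OF fW' _ e1] h by simp
    show "F' = FB" using card_subset_eq[OF fF' _ e2] h by simp
  qed (use sgB in auto)
  then have "is_cycle_graph WB FB \<or> is_single_edge WB FB \<or> is_single_vertex WB FB"
    using assms unfolding cactus_def by blast
  then have d2: "card {u. {u, v} \<in> FB} \<le> 2" by (rule block_deg)
  have "{u. {u, v} \<in> F} \<subseteq> {u. {u, v} \<in> FB}" using sgB(4) by auto
  moreover have "finite {u. {u, v} \<in> FB}"
  proof -
    have "{u. {u, v} \<in> FB} \<subseteq> WB" using sgB(1) unfolding subgraph_def by auto
    then show ?thesis using fWB by (meson finite_subset)
  qed
  ultimately show "card {u. {u, v} \<in> F} \<le> 2" using d2 by (meson card_mono le_trans)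
qed

definition dg :: "'a set set \<Rightarrow> 'a set \<Rightarrow> 'a \<Rightarrow> nat" where
  "dg E A v = card {u \<in> A. {u, v} \<in> E}"

definition pendant :: "'a set set \<Rightarrow> 'a set \<Rightarrow> 'a set \<Rightarrow> 'a \<Rightarrow> bool" where
  "pendant E U S c \<longleftrightarrow> S \<subseteq> U \<and> S \<noteq> {} \<and> c \<in> U \<and> c \<notin> S \<and>
     (\<forall>s\<in>S. \<forall>u\<in>U. {u, s} \<in> E \<longrightarrow> u \<in> S \<or> u = c)"

lemma adj_rel_iff[simp]: "(a, b) \<in> adj_rel F \<longleftrightarrow> {a, b} \<in> F \<and> a \<noteq> b"
  unfolding adj_rel_def by simp

lemma adj_rtr_sym:
  assumes "(x, y) \<in> (adj_rel F)\<^sup>*" shows "(y, x) \<in> (adj_rel F)\<^sup>*"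
proof -
  have "sym (adj_rel F)" unfolding sym_def by (auto simp: insert_commute)
  then have "sym ((adj_rel F)\<^sup>*)" by (rule sym_rtrancl)
  then show ?thesis using assms unfolding sym_def by blast
qed

lemma adj_rtr_mono:
  assumes "(x, y) \<in> (adj_rel F)\<^sup>*" "F \<subseteq> F'" shows "(x, y) \<in> (adj_rel F')\<^sup>*"
proof -
  have "adj_rel F \<subseteq> adj_rel F'" using assms(2) unfolding adj_rel_def by auto
  then show ?thesis using assms(1) rtrancl_mono by blast
qed

lemma simple_edge_neq:
  assumes "simple_graph V E" "{u, v} \<in> E" shows "u \<noteq> v"
  using assms unfolding simple_graph_def
  by (smt (verit, ccfv_threshold) doubleton_eq_iff insert_absorb2 mem_Collect_eq subsetD)

lemma reach_pendant:
  assumes sg: "simple_graph V E" and pe: "pendant E U S c"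
    and W: "W = insert c S" and F: "F = {e\<in>E. e \<subseteq> W}" and z: "z \<in> W"
    and x: "x \<in> S" "x \<noteq> z"
    and R: "R = adj_rel {e \<in> F. z \<notin> e}"
    and K: "K = {y \<in> S - {z}. (x, y) \<in> R\<^sup>*}"
    and nc: "(x, c) \<notin> R\<^sup>* \<or> z = c"
  shows "pendant E U K z"
  unfolding pendant_def
proof (intro conjI ballI impI)
  show "K \<subseteq> U" using pe K unfolding pendant_def by auto
  show "K \<noteq> {}" using x K by auto
  show "z \<in> U" using pe z W unfolding pendant_def by auto
  show "z \<notin> K" using K by auto
  fix y u assume y: "y \<in> K" and u: "u \<in> U" and e: "{u, y} \<in> E"
  show "u \<in> K \<or> u = z"
  proof (cases "u = z")
    case True then show ?thesis by simp
  next
    case False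
    have yS: "y \<in> S" "y \<noteq> z" "(x, y) \<in> R\<^sup>*" using y K by auto
    have uSc: "u \<in> S \<or> u = c" using pe yS(1) u e unfolding pendant_def by blast
    have uy: "u \<noteq> y" using simple_edge_neq[OF sg e] .
    have "{y, u} \<in> {e \<in> F. z \<notin> e}" using e uSc yS False F W by (auto simp: insert_commute)
    then have "(y, u) \<in> R" using R uy by simp
    then have xu: "(x, u) \<in> R\<^sup>*" using yS(3) by simp
    show ?thesis
    proof (cases "u = c")
      case True then show ?thesis using xu nc False by simp
    next
      case False
      then have "u \<in> S" using uSc by simp
      then show ?thesis using xu \<open>u \<noteq> z\<close> K by auto
    qed
  qed
qed

lemma SL:
  assumes sg: "simple_graph V E" and gd: "good V E" and UV: "U \<subseteq> V" and Une: "U \<noteq> {}"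
    and d2: "\<forall>v\<in>U. dg E U v \<ge> 2"
  shows "\<exists>S c. pendant E U S c \<and> (\<forall>s\<in>S. dg E U s \<le> 2)"
proof -
  have fV: "finite V" using sg unfolding simple_graph_def by simp
  have fU: "finite U" using fV UV by (meson finite_subset)
  obtain v0 where v0: "v0 \<in> U" using Une by blast
  have "U - {v0} \<noteq> {}"
  proof
    assume "U - {v0} = {}"
    then have "{u \<in> U. {u, v0} \<in> E} \<subseteq> {v0}" by auto
    then have "card {u \<in> U. {u, v0} \<in> E} \<le> card {v0}" by (intro card_mono) auto
    then have "dg E U v0 \<le> 1" unfolding dg_def by simp
    then show False using d2 v0 by force
  qed
  then have "pendant E U (U - {v0}) v0" using v0 unfolding pendant_def by auto
  then obtain P where P: "pendant E U (fst P) (snd P)"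
    and Pmin: "\<forall>Q. pendant E U (fst Q) (snd Q) \<longrightarrow> card (fst P) \<le> card (fst Q)"
    using ex_has_least_nat[of "\<lambda>Q. pendant E U (fst Q) (snd Q)" "(U - {v0}, v0)" "\<lambda>Q. card (fst Q)"]
    by auto
  define S where "S = fst P"
  define c where "c = snd P"
  have pe: "pendant E U S c" using P S_def c_def by simp
  have min: "\<And>S' c'. pendant E U S' c' \<Longrightarrow> card S \<le> card S'"
    using Pmin S_def by (metis fst_conv snd_conv)
  have SU: "S \<subseteq> U" "S \<noteq> {}" "c \<in> U" "c \<notin> S"
    and clo: "\<And>s u. s \<in> S \<Longrightarrow> u \<in> U \<Longrightarrow> {u, s} \<in> E \<Longrightarrow> u \<in> S \<or> u = c"
    using pe unfolding pendant_def by auto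
  have fS: "finite S" using fU SU(1) by (meson finite_subset)
  define W where "W = insert c S"
  define F where "F = {e\<in>E. e \<subseteq> W}"
  have "\<exists>s1\<in>S. {s1, c} \<in> E"
  proof (rule ccontr)
    assume nc: "\<not> (\<exists>s1\<in>S. {s1, c} \<in> E)"
    obtain s where s: "s \<in> S" using SU by blast
    have "dg E U s \<ge> 2" using d2 s SU by auto
    then have "{u \<in> U. {u, s} \<in> E} \<noteq> {}" unfolding dg_def by (intro notI) simp
    then obtain u where u: "u \<in> U" "{u, s} \<in> E" by blast
    have "u \<noteq> c" using nc u s by (metis insert_commute)
    then have uS: "u \<in> S - {s}" using clo[OF s u(1) u(2)] simple_edge_neq[OF sg u(2)] by simp
    have "pendant E U (S - {s}) s"
      unfolding pendant_def
    proof (intro conjI ballI impI)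
      fix y w assume y: "y \<in> S - {s}" and w: "w \<in> U" and e: "{w, y} \<in> E"
      have "w \<noteq> c" using nc y e by (metis DiffD1 insert_commute)
      then show "w \<in> S - {s} \<or> w = s" using clo[of y w] y w e by auto
    qed (use SU s uS in auto)
    then have "card S \<le> card (S - {s})" by (rule min)
    moreover have "card (S - {s}) < card S" using fS s by (meson card_Diff1_less)
    ultimately show False by simp
  qed
  then obtain s1 where s1: "s1 \<in> S" "{s1, c} \<in> E" by blast
  have connS: "\<And>x y. x \<in> S \<Longrightarrow> y \<in> S \<Longrightarrow> (x, y) \<in> (adj_rel {e \<in> F. c \<notin> e})\<^sup>*"
  proof -
    fix x y assume x: "x \<in> S" and y: "y \<in> S"
    define K where "K = {y \<in> S - {c}. (x, y) \<in> (adj_rel {e \<in> F. c \<notin> e})\<^sup>*}"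
    have "pendant E U K c"
      using reach_pendant[OF sg pe W_def F_def _ x _ refl K_def] x SU by (auto simp: W_def)
    then have "card S \<le> card K" by (rule min)
    moreover have "K \<subseteq> S" unfolding K_def by auto
    ultimately have "K = S" using card_seteq[OF fS] by blast
    then show "(x, y) \<in> (adj_rel {e \<in> F. c \<notin> e})\<^sup>*" using y K_def by auto
  qed
  have connz: "\<And>z x. z \<in> S \<Longrightarrow> x \<in> S \<Longrightarrow> x \<noteq> z \<Longrightarrow> (x, c) \<in> (adj_rel {e \<in> F. z \<notin> e})\<^sup>*"
  proof (rule ccontr)
    fix z x assume z: "z \<in> S" and x: "x \<in> S" "x \<noteq> z"
      and nr: "(x, c) \<notin> (adj_rel {e \<in> F. z \<notin> e})\<^sup>*"
    define K where "K = {y \<in> S - {z}. (x, y) \<in> (adj_rel {e \<in> F. z \<notin> e})\<^sup>*}"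
    have "pendant E U K z"
      using reach_pendant[OF sg pe W_def F_def _ x refl K_def] z nr by (auto simp: W_def)
    then have c1: "card S \<le> card K" by (rule min)
    have "K \<subseteq> S - {z}" unfolding K_def by auto
    then have "card K \<le> card (S - {z})" using fS by (intro card_mono) auto
    moreover have "card (S - {z}) < card S" using fS z by (rule card_Diff1_less)
    ultimately have "card K < card S" by simp
    with c1 show False by simp
  qed
  have sgWF: "subgraph W F V E" unfolding subgraph_def W_def F_def using SU UV by auto
  have allc: "\<And>a. a \<in> W \<Longrightarrow> (a, c) \<in> (adj_rel F)\<^sup>*"
  proof -
    fix a assume a: "a \<in> W"
    show "(a, c) \<in> (adj_rel F)\<^sup>*"
    proof (cases "a = c")
      case True then show ?thesis by simp
    next
      case False
      then have aS: "a \<in> S" using a W_def by simp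
      have "(a, s1) \<in> (adj_rel F)\<^sup>*" using adj_rtr_mono[OF connS[OF aS s1(1)]] by blast
      moreover have "(s1, c) \<in> adj_rel F" using s1 SU F_def W_def simple_edge_neq[OF sg s1(2)] by auto
      ultimately show ?thesis by (rule rtrancl_into_rtrancl)
    qed
  qed
  have ns: "nonseparable W F"
    unfolding nonseparable_def connected_graph_def
  proof (intro conjI ballI)
    show "W \<noteq> {}" unfolding W_def by simp
    fix a b assume a: "a \<in> W" and b: "b \<in> W"
    show "(a, b) \<in> (adj_rel F)\<^sup>*" using allc[OF a] adj_rtr_sym[OF allc[OF b]] by simp
  next
    fix z a b assume z: "z \<in> W" and a: "a \<in> W - {z}" and b: "b \<in> W - {z}"
    show "(a, b) \<in> (adj_rel {e \<in> F. z \<notin> e})\<^sup>*"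
    proof (cases "z = c")
      case True
      then show ?thesis using a b connS W_def by auto
    next
      case False
      then have zS: "z \<in> S" using z W_def by simp
      have r: "\<And>y. y \<in> W - {z} \<Longrightarrow> (y, c) \<in> (adj_rel {e \<in> F. z \<notin> e})\<^sup>*"
      proof -
        fix y assume y: "y \<in> W - {z}"
        show "(y, c) \<in> (adj_rel {e \<in> F. z \<notin> e})\<^sup>*"
        proof (cases "y = c")
          case True then show ?thesis by simp
        next
          case False then show ?thesis using connz[OF zS] y W_def by auto
        qed
      qed
      show ?thesis using r[OF a] adj_rtr_sym[OF r[OF b]] by simp
    qed
  qed
  have degW: "\<forall>v\<in>W. card {u. {u, v} \<in> F} \<le> 2" using gd sgWF ns unfolding good_def by blast
  have "\<forall>s\<in>S. dg E U s \<le> 2"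
  proof
    fix s assume s: "s \<in> S"
    have sub: "{u \<in> U. {u, s} \<in> E} \<subseteq> {u. {u, s} \<in> F}"
      using clo[OF s] s unfolding F_def W_def by auto
    have "{u. {u, s} \<in> F} \<subseteq> W" unfolding F_def by auto
    then have "finite {u. {u, s} \<in> F}" using fS W_def by (meson finite.insertI finite_subset)
    then have "dg E U s \<le> card {u. {u, s} \<in> F}" unfolding dg_def using sub by (rule card_mono)
    then show "dg E U s \<le> 2" using degW s W_def by force
  qed
  then show ?thesis using pe by blast
qed

definition winv :: "nat \<Rightarrow> 'a set \<Rightarrow> ('a \<Rightarrow> int) \<Rightarrow> ('a \<Rightarrow> nat) \<Rightarrow> bool" where
  "winv k U t w \<longleftrightarrow> (\<forall>v\<in>U. 1 \<le> w v \<and> int k + 1 - t v \<le> int (w v))"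

definition sol :: "'a set set \<Rightarrow> nat \<Rightarrow> 'a set \<Rightarrow> ('a \<Rightarrow> int) \<Rightarrow> ('a \<Rightarrow> nat) \<Rightarrow> 'a set \<Rightarrow> bool" where
  "sol E k U t w X \<longleftrightarrow> X \<subseteq> U \<and> (\<forall>v\<in>U - X. int (dg E (U - X) v) \<le> t v) \<and>
     (X = {} \<or> (k + 1) * card X < sum w U)"

lemma dg_mono: "A \<subseteq> B \<Longrightarrow> finite B \<Longrightarrow> dg E A u \<le> dg E B u"
  unfolding dg_def by (rule card_mono) auto

lemma dg_union: "finite A \<Longrightarrow> finite B \<Longrightarrow> A \<inter> B = {} \<Longrightarrow> dg E (A \<union> B) u = dg E A u + dg E B u"
  unfolding dg_def
proof -
  assume fin: "finite A" "finite B" and d: "A \<inter> B = {}"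
  have "{x \<in> A \<union> B. {x, u} \<in> E} = {x \<in> A. {x, u} \<in> E} \<union> {x \<in> B. {x, u} \<in> E}" by auto
  then show "card {x \<in> A \<union> B. {x, u} \<in> E} = card {x \<in> A. {x, u} \<in> E} + card {x \<in> B. {x, u} \<in> E}"
    using fin d by (simp add: card_Un_disjoint disjoint_iff)
qed

lemma dg_insert: "finite A \<Longrightarrow> v \<notin> A \<Longrightarrow> dg E (insert v A) u = dg E A u + (if {v, u} \<in> E then 1 else 0)"
proof -
  assume "finite A" "v \<notin> A"
  then have "dg E ({v} \<union> A) u = dg E {v} u + dg E A u" by (intro dg_union) auto
  moreover have "dg E {v} u = (if {v, u} \<in> E then 1 else 0)"
  proof (cases "{v, u} \<in> E")
    case True
    then have "{x \<in> {v}. {x, u} \<in> E} = {v}" by auto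
    then show ?thesis using True unfolding dg_def by simp
  next
    case False
    then have "{x \<in> {v}. {x, u} \<in> E} = {}" by auto
    then show ?thesis using False unfolding dg_def by simp
  qed
  ultimately show ?thesis by simp
qed

lemma stepA:
  assumes fU: "finite U" and v: "v \<in> U" "t v \<le> 0" "t v < 0 \<or> U \<noteq> {v}"
    and inv: "winv k U t w" and s: "sol E k (U - {v}) t w X'"
  shows "sol E k U t w (insert v X')"
proof -
  have X': "X' \<subseteq> U - {v}" using s unfolding sol_def by simp
  have eq: "U - insert v X' = (U - {v}) - X'" by auto
  have wv: "int (w v) \<ge> int k + 1 - t v" using inv v unfolding winv_def by simp
  have sw: "sum w U = sum w (U - {v}) + w v" using fU v by (simp add: sum.remove)
  have cnt: "(k + 1) * card (insert v X') < sum w U"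
  proof (cases "X' = {}")
    case True
    show ?thesis
    proof (cases "t v < 0")
      case True then have "w v \<ge> k + 2" using wv by linarith
      then show ?thesis using sw \<open>X' = {}\<close> by simp
    next
      case False
      then have "U \<noteq> {v}" using v by simp
      then obtain u where u: "u \<in> U - {v}" using v by blast
      then have "w u \<ge> 1" using inv unfolding winv_def by simp
      moreover have "w u \<le> sum w (U - {v})" using u fU by (intro member_le_sum) auto
      moreover have "w v \<ge> k + 1" using wv v by linarith
      ultimately show ?thesis using sw \<open>X' = {}\<close> by simp
    qed
  next
    case False
    then have "(k + 1) * card X' < sum w (U - {v})" using s unfolding sol_def by simp
    moreover have "card (insert v X') = card X' + 1"
    proof -
      have "finite X'" using X' fU by (meson finite_Diff finite_subset)
      moreover have "v \<notin> X'" using X' by auto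
      ultimately show ?thesis by simp
    qed
    moreover have "w v \<ge> k + 1" using wv v by linarith
    ultimately show ?thesis using sw by simp
  qed
  show ?thesis unfolding sol_def using s X' v cnt unfolding sol_def eq by auto
qed

lemma nbr_empty:
  assumes "finite U" "dg E U v = 0" "y \<in> U" shows "{v, y} \<notin> E"
proof
  assume "{v, y} \<in> E"
  then have "y \<in> {u \<in> U. {u, v} \<in> E}" using assms by (auto simp: insert_commute)
  moreover have "finite {u \<in> U. {u, v} \<in> E}" using assms(1) by simp
  ultimately show False using assms(2) unfolding dg_def by (simp add: card_0_eq) blast
qed

lemma sum_upd_remove:
  assumes "finite U" "u \<in> U"
  shows "sum (w(u := x)) U = sum w U - w u + (x :: nat)"
proof -
  have "sum (w(u := x)) U = x + sum (w(u := x)) (U - {u})" using assms by (simp add: sum.remove)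
  also have "sum (w(u := x)) (U - {u}) = sum w (U - {u})" by (intro sum.cong) auto
  also have "sum w U = w u + sum w (U - {u})" using assms by (simp add: sum.remove)
  ultimately show ?thesis by simp
qed

lemma stepB:
  assumes fU: "finite U" and v: "v \<in> U" "dg E U v = 0" "t v \<ge> 0"
    and s: "sol E k (U - {v}) t w X'"
  shows "sol E k U t w X'"
proof -
  have X': "X' \<subseteq> U - {v}" using s unfolding sol_def by simp
  have fX: "finite (U - {v} - X')" using fU by simp
  have deg: "\<forall>y\<in>U - X'. int (dg E (U - X') y) \<le> t y"
  proof
    fix y assume y: "y \<in> U - X'"
    show "int (dg E (U - X') y) \<le> t y"
    proof (cases "y = v")
      case True
      have "dg E (U - X') v \<le> dg E U v" using fU by (intro dg_mono) auto
      then show ?thesis using True v by simp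
    next
      case False
      have eq: "U - X' = insert v (U - {v} - X')" using X' v by auto
      have "{v, y} \<notin> E" using nbr_empty[OF fU v(2)] y by simp
      then have "dg E (U - X') y = dg E (U - {v} - X') y" unfolding eq using dg_insert[OF fX] by simp
      moreover have "y \<in> U - {v} - X'" using y False by simp
      ultimately show ?thesis using s unfolding sol_def by simp
    qed
  qed
  have "sum w (U - {v}) \<le> sum w U" using fU by (intro sum_mono2) auto
  then show ?thesis using s X' deg unfolding sol_def by auto
qed

lemma stepC:
  assumes sg: "simple_graph V E" and fU: "finite U" and v: "v \<in> U" "dg E U v = 1" "t v \<ge> 1"
    and u: "u \<in> U" "{u, v} \<in> E"
    and s: "sol E k (U - {v}) (t(u := t u - 1)) (w(u := w u + w v)) X'"
  shows "sol E k U t w X'"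
proof -
  have uv: "u \<noteq> v" using simple_edge_neq[OF sg u(2)] .
  have N: "{x \<in> U. {x, v} \<in> E} = {u}"
  proof -
    have "card {x \<in> U. {x, v} \<in> E} = 1" using v unfolding dg_def by simp
    moreover have "u \<in> {x \<in> U. {x, v} \<in> E}" using u by simp
    moreover obtain x where "{x \<in> U. {x, v} \<in> E} = {x}"
      using \<open>card {x \<in> U. {x, v} \<in> E} = 1\<close> by (rule card_1_singletonE)
    ultimately show ?thesis by auto
  qed
  have X': "X' \<subseteq> U - {v}" using s unfolding sol_def by simp
  have fX: "finite (U - {v} - X')" using fU by simp
  have deg: "\<forall>y\<in>U - X'. int (dg E (U - X') y) \<le> t y"
  proof
    fix y assume y: "y \<in> U - X'"
    show "int (dg E (U - X') y) \<le> t y"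
    proof (cases "y = v")
      case True
      have "dg E (U - X') v \<le> dg E U v" using fU by (intro dg_mono) auto
      then show ?thesis using True v by simp
    next
      case False
      have eq: "U - X' = insert v (U - {v} - X')" using X' v by auto
      have y': "y \<in> U - {v} - X'" using y False by simp
      then have h: "int (dg E (U - {v} - X') y) \<le> (t(u := t u - 1)) y" using s unfolding sol_def by blast
      have d: "dg E (U - X') y = dg E (U - {v} - X') y + (if {v, y} \<in> E then 1 else 0)"
        unfolding eq using dg_insert[OF fX] by simp
      show ?thesis
      proof (cases "y = u")
        case True
        then show ?thesis using h d u(2) by (simp add: insert_commute)
      next
        case False
        have "{v, y} \<notin> E"
        proof
          assume "{v, y} \<in> E"
          then have "y \<in> {x \<in> U. {x, v} \<in> E}" using y by (auto simp: insert_commute)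
          then show False using N False by simp
        qed
        then show ?thesis using h d False by simp
      qed
    qed
  qed
  have uU: "u \<in> U - {v}" using u uv by simp
  have "sum (w(u := w u + w v)) (U - {v}) = sum w (U - {v}) - w u + (w u + w v)"
    using sum_upd_remove[OF _ uU] fU by simp
  moreover have "w u \<le> sum w (U - {v})" using uU fU by (intro member_le_sum) auto
  moreover have "sum w U = sum w (U - {v}) + w v" using fU v by (simp add: sum.remove)
  ultimately have "sum (w(u := w u + w v)) (U - {v}) = sum w U" by simp
  then show ?thesis using s X' deg unfolding sol_def by auto
qed

lemma sum_remove2:
  assumes "finite U" "v \<in> U" "a \<in> U" "v \<noteq> a"
  shows "sum w U = w v + w a + sum w (U - {v, a})"
proof -
  have "sum w U = w v + sum w (U - {v})" using assms by (simp add: sum.remove)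
  moreover have "sum w (U - {v}) = w a + sum w (U - {v} - {a})" using assms by (simp add: sum.remove)
  moreover have "U - {v} - {a} = U - {v, a}" by auto
  ultimately show ?thesis by (simp add: add.assoc)
qed

lemma stepD1:
  assumes fU: "finite U" and v: "v \<in> U" "t v = 1" and ab: "a \<in> U" "b \<in> U" "a \<noteq> b" "v \<noteq> a" "v \<noteq> b"
    and N: "{x \<in> U. {x, v} \<in> E} = {a, b}" and b: "dg E U b \<le> 2" "t b \<ge> 2"
    and inv: "winv k U t w"
    and s: "sol E k (U - {v, a}) t w X'"
  shows "sol E k U t w (insert a X')"
proof -
  have X': "X' \<subseteq> U - {v, a}" using s unfolding sol_def by simp
  have fX: "finite (U - {v, a} - X')" using fU by simp
  have eq: "U - insert a X' = insert v (U - {v, a} - X')" using X' v ab by auto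
  have deg: "\<forall>y\<in>U - insert a X'. int (dg E (U - insert a X') y) \<le> t y"
  proof
    fix y assume y: "y \<in> U - insert a X'"
    show "int (dg E (U - insert a X') y) \<le> t y"
    proof (cases "y = v")
      case True
      have "{x \<in> U - insert a X'. {x, v} \<in> E} \<subseteq> {b}" using N by auto
      then have "dg E (U - insert a X') v \<le> card {b}" unfolding dg_def by (intro card_mono) auto
      then show ?thesis using True v by simp
    next
      case yv: False
      show ?thesis
      proof (cases "y = b")
        case True
        have "dg E (U - insert a X') b \<le> dg E U b" using fU by (intro dg_mono) auto
        then show ?thesis using True b by simp
      next
        case False
        have y': "y \<in> U - {v, a} - X'" using y yv by auto
        then have h: "int (dg E (U - {v, a} - X') y) \<le> t y" using s unfolding sol_def by blast
        have "{v, y} \<notin> E"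
        proof
          assume "{v, y} \<in> E"
          then have "y \<in> {x \<in> U. {x, v} \<in> E}" using y by (auto simp: insert_commute)
          then show False using N False y by auto
        qed
        then have "dg E (U - insert a X') y = dg E (U - {v, a} - X') y"
          unfolding eq using dg_insert[OF fX] y' by simp
        then show ?thesis using h by simp
      qed
    qed
  qed
  have sw: "sum w U = w v + w a + sum w (U - {v, a})" using sum_remove2[OF fU v(1) ab(1) ab(4)] .
  have wv: "w v \<ge> k" using inv v unfolding winv_def by force
  have wa: "w a \<ge> 1" using inv ab unfolding winv_def by force
  have bU: "b \<in> U - {v, a}" using ab by auto
  have "w b \<le> sum w (U - {v, a})" using bU fU by (intro member_le_sum) auto
  moreover have "w b \<ge> 1" using inv ab unfolding winv_def by force
  ultimately have s1: "sum w (U - {v, a}) \<ge> 1" by simp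
  have cnt: "(k + 1) * card (insert a X') < sum w U"
  proof (cases "X' = {}")
    case True then show ?thesis using sw wv wa s1 by simp
  next
    case False
    then have "(k + 1) * card X' < sum w (U - {v, a})" using s unfolding sol_def by simp
    moreover have "card (insert a X') = card X' + 1"
    proof -
      have "finite X'" using X' fU by (meson finite_Diff finite_subset)
      moreover have "a \<notin> X'" using X' by auto
      ultimately show ?thesis by simp
    qed
    ultimately show ?thesis using sw wv wa by simp
  qed
  show ?thesis unfolding sol_def using X' ab deg cnt by auto
qed

lemma stepD2:
  assumes fU: "finite U" and k: "k \<ge> 2" and v: "v \<in> U" "t v = 1"
    and ab: "a \<in> U" "b \<in> U" "a \<noteq> b" "v \<noteq> a" "v \<noteq> b"
    and N: "{x \<in> U. {x, v} \<in> E} = {a, b}" and b: "t b = 1"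
    and inv: "winv k U t w"
    and s: "sol E k (U - {v, b}) (t(a := t a - 1)) (w(a := w a + 1)) X'"
  shows "sol E k U t w (insert b X')"
proof -
  have X': "X' \<subseteq> U - {v, b}" using s unfolding sol_def by simp
  have fX: "finite (U - {v, b} - X')" using fU by simp
  have eq: "U - insert b X' = insert v (U - {v, b} - X')" using X' v ab by auto
  have deg: "\<forall>y\<in>U - insert b X'. int (dg E (U - insert b X') y) \<le> t y"
  proof
    fix y assume y: "y \<in> U - insert b X'"
    show "int (dg E (U - insert b X') y) \<le> t y"
    proof (cases "y = v")
      case True
      have "{x \<in> U - insert b X'. {x, v} \<in> E} \<subseteq> {a}" using N by auto
      then have "dg E (U - insert b X') v \<le> card {a}" unfolding dg_def by (intro card_mono) auto
      then show ?thesis using True v by simp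
    next
      case yv: False
      have y': "y \<in> U - {v, b} - X'" using y yv by auto
      then have h: "int (dg E (U - {v, b} - X') y) \<le> (t(a := t a - 1)) y" using s unfolding sol_def by blast
      have d: "dg E (U - insert b X') y = dg E (U - {v, b} - X') y + (if {v, y} \<in> E then 1 else 0)"
        unfolding eq using dg_insert[OF fX] y' by simp
      show ?thesis
      proof (cases "y = a")
        case True
        then show ?thesis using h d by simp
      next
        case False
        have "{v, y} \<notin> E"
        proof
          assume "{v, y} \<in> E"
          then have "y \<in> {x \<in> U. {x, v} \<in> E}" using y by (auto simp: insert_commute)
          then show False using N False y by auto
        qed
        then show ?thesis using h d False by simp
      qed
    qed
  qed
  have sw: "sum w U = w v + w b + sum w (U - {v, b})" using sum_remove2[OF fU v(1) ab(2) ab(5)] .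
  have aU: "a \<in> U - {v, b}" using ab by auto
  have sw': "sum (w(a := w a + 1)) (U - {v, b}) = sum w (U - {v, b}) - w a + (w a + 1)"
    using sum_upd_remove[OF _ aU] fU by simp
  have "w a \<le> sum w (U - {v, b})" using aU fU by (intro member_le_sum) auto
  then have sw'': "sum (w(a := w a + 1)) (U - {v, b}) = sum w (U - {v, b}) + 1" using sw' by simp
  have wv: "w v \<ge> k" using inv v unfolding winv_def by force
  have wb: "w b \<ge> k" using inv ab b unfolding winv_def by force
  have cnt: "(k + 1) * card (insert b X') < sum w U"
  proof (cases "X' = {}")
    case True then show ?thesis using sw wv wb k by simp
  next
    case False
    then have "(k + 1) * card X' < sum w (U - {v, b}) + 1" using s sw'' unfolding sol_def by simp
    moreover have "card (insert b X') = card X' + 1"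
    proof -
      have "finite X'" using X' fU by (meson finite_Diff finite_subset)
      moreover have "b \<notin> X'" using X' by auto
      ultimately show ?thesis by simp
    qed
    ultimately show ?thesis using sw wv wb k by simp
  qed
  show ?thesis unfolding sol_def using X' ab deg cnt by auto
qed

lemma stepE:
  assumes fU: "finite U" and pe: "pendant E U S c"
    and Sp: "\<forall>s\<in>S. t s \<ge> 2 \<and> dg E U s \<le> 2"
    and s: "sol E k (U - S) (t(c := t c - int (card {x \<in> S. {x, c} \<in> E}))) (w(c := w c + sum w S)) X'"
  shows "sol E k U t w X'"
proof -
  have SU: "S \<subseteq> U" "c \<in> U" "c \<notin> S"
    and clo: "\<And>s u. s \<in> S \<Longrightarrow> u \<in> U \<Longrightarrow> {u, s} \<in> E \<Longrightarrow> u \<in> S \<or> u = c"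
    using pe unfolding pendant_def by auto
  have fS: "finite S" using fU SU by (meson finite_subset)
  have X': "X' \<subseteq> U - S" using s unfolding sol_def by simp
  have eq: "U - X' = (U - S - X') \<union> S" using X' SU by auto
  have fX: "finite (U - S - X')" using fU by simp
  have deg: "\<forall>y\<in>U - X'. int (dg E (U - X') y) \<le> t y"
  proof
    fix y assume y: "y \<in> U - X'"
    show "int (dg E (U - X') y) \<le> t y"
    proof (cases "y \<in> S")
      case True
      have "dg E (U - X') y \<le> dg E U y" using fU by (intro dg_mono) auto
      then show ?thesis using True Sp by force
    next
      case False
      have y': "y \<in> U - S - X'" using y False by simp
      then have h: "int (dg E (U - S - X') y) \<le> (t(c := t c - int (card {x \<in> S. {x, c} \<in> E}))) y"
        using s unfolding sol_def by blast
      have d: "dg E (U - X') y = dg E (U - S - X') y + dg E S y"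
        unfolding eq by (rule dg_union[OF fX fS]) auto
      show ?thesis
      proof (cases "y = c")
        case True
        then show ?thesis using h d unfolding dg_def by simp
      next
        case yc: False
        have "{x \<in> S. {x, y} \<in> E} = {}"
        proof (rule ccontr)
          assume "{x \<in> S. {x, y} \<in> E} \<noteq> {}"
          then obtain x where "x \<in> S" "{x, y} \<in> E" by blast
          then have "y \<in> S \<or> y = c" using clo[of x y] y by (auto simp: insert_commute)
          then show False using False yc by simp
        qed
        then have "dg E S y = 0" unfolding dg_def by (metis card.empty)
        then show ?thesis using h d yc by simp
      qed
    qed
  qed
  have cU: "c \<in> U - S" using SU by simp
  have "sum (w(c := w c + sum w S)) (U - S) = sum w (U - S) - w c + (w c + sum w S)"
    using sum_upd_remove[OF _ cU] fU by simp
  moreover have "w c \<le> sum w (U - S)" using cU fU by (intro member_le_sum) auto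
  moreover have "sum w U = sum w (U - S) + sum w S" using fU SU by (metis add.commute sum.subset_diff)
  ultimately have "sum (w(c := w c + sum w S)) (U - S) = sum w U" by simp
  then show ?thesis using s X' deg unfolding sol_def by auto
qed

lemma winv_sub: "winv k U t w \<Longrightarrow> U' \<subseteq> U \<Longrightarrow> winv k U' t w"
  unfolding winv_def by blast

lemma card2_other:
  assumes "card N = 2" "b \<in> N" obtains a where "N = {a, b}" "a \<noteq> b"
proof -
  obtain x y where xy: "N = {x, y}" "x \<noteq> y" using assms(1) by (meson card_2_iff)
  show ?thesis
  proof (cases "b = x")
    case True then show ?thesis using that[of y] xy by (simp add: insert_commute)
  next
    case False then have "b = y" using assms(2) xy by simp
    then show ?thesis using that[of x] xy by simp
  qed
qed

lemma mainL:
  assumes sg: "simple_graph V E" and gd: "good V E" and k: "k \<ge> 2"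
  shows "U \<subseteq> V \<Longrightarrow> winv k U t w \<Longrightarrow> \<exists>X. sol E k U t w X"
proof (induction "card U" arbitrary: U t w rule: less_induct)
  case less
  have fV: "finite V" using sg unfolding simple_graph_def by simp
  have fU: "finite U" using less.prems(1) fV by (meson finite_subset)
  have IH: "\<And>U' t' w'. U' \<subseteq> U \<Longrightarrow> U' \<noteq> U \<Longrightarrow> winv k U' t' w' \<Longrightarrow> \<exists>X. sol E k U' t' w' X"
  proof -
    fix U' t' w' assume h: "U' \<subseteq> U" "U' \<noteq> U" "winv k U' t' w'"
    have "card U' < card U" using h fU by (meson psubsetI psubset_card_mono)
    then show "\<exists>X. sol E k U' t' w' X" using less.hyps h less.prems(1) by blast
  qed
  have inv: "winv k U t w" using less.prems(2) .
  have noloop: "\<And>x. {x, x} \<notin> E" using simple_edge_neq[OF sg] by blast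
  show ?case
  proof (cases "U = {}")
    case True
    then have "sol E k U t w {}" unfolding sol_def by simp
    then show ?thesis by blast
  next
    case Une: False
    show ?thesis
    proof (cases "\<exists>v\<in>U. t v \<le> 0 \<and> (t v < 0 \<or> U \<noteq> {v})")
      case True
      then obtain v where v: "v \<in> U" "t v \<le> 0" "t v < 0 \<or> U \<noteq> {v}" by blast
      obtain X' where "sol E k (U - {v}) t w X'"
        using IH[of "U - {v}" t w] v winv_sub[OF inv] by blast
      then show ?thesis using stepA[where t=t and E=E, OF fU v(1) v(2) v(3) inv] by blast
    next
      case nA: False
      show ?thesis
      proof (cases "\<exists>v\<in>U. dg E U v = 0 \<and> t v \<ge> 0")
        case True
        then obtain v where v: "v \<in> U" "dg E U v = 0" "t v \<ge> 0" by blast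
        obtain X' where "sol E k (U - {v}) t w X'"
          using IH[of "U - {v}" t w] v winv_sub[OF inv] by blast
        then show ?thesis using stepB[where t=t and E=E, OF fU v(1) v(2) v(3)] by blast
      next
        case nB: False
        have t1: "\<forall>v\<in>U. t v \<ge> 1"
        proof
          fix v assume v: "v \<in> U"
          show "t v \<ge> 1"
          proof (rule ccontr)
            assume "\<not> t v \<ge> 1"
            then have "t v \<le> 0" by simp
            then have "U = {v}" "t v = 0" using nA v by auto
            then have "dg E U v = 0" using noloop unfolding dg_def by simp
            then show False using nB v \<open>t v = 0\<close> by auto
          qed
        qed
        have d1: "\<forall>v\<in>U. dg E U v \<noteq> 0" using nB t1 by force
        show ?thesis
        proof (cases "\<exists>v\<in>U. dg E U v = 1 \<and> t v \<ge> 1")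
          case True
          then obtain v where v: "v \<in> U" "dg E U v = 1" "t v \<ge> 1" by blast
          then have "{x \<in> U. {x, v} \<in> E} \<noteq> {}" unfolding dg_def by (intro notI) simp
          then obtain u where u: "u \<in> U" "{u, v} \<in> E" by blast
          have uv: "u \<noteq> v" using simple_edge_neq[OF sg u(2)] .
          have "winv k (U - {v}) (t(u := t u - 1)) (w(u := w u + w v))"
          proof -
            have "int k + 1 - t u \<le> int (w u)" "1 \<le> w v" using inv v u unfolding winv_def by auto
            then show ?thesis using inv v unfolding winv_def by auto
          qed
          then obtain X' where "sol E k (U - {v}) (t(u := t u - 1)) (w(u := w u + w v)) X'"
            using IH[of "U - {v}"] v by blast
          then show ?thesis using stepC[where t=t and w=w, OF sg fU v(1) v(2) v(3) u(1) u(2)] by blast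
        next
          case nC: False
          have d2: "\<forall>v\<in>U. dg E U v \<ge> 2" using nC d1 t1 by force
          have caseD: "\<exists>X. sol E k U t w X" if v: "v \<in> U" "t v = 1" "dg E U v = 2"
            and b: "b \<in> U" "{b, v} \<in> E" "dg E U b = 2" for v b
          proof -
            have bN: "b \<in> {x \<in> U. {x, v} \<in> E}" using b by simp
            obtain a where N: "{x \<in> U. {x, v} \<in> E} = {a, b}" "a \<noteq> b"
              using card2_other[OF _ bN] v unfolding dg_def by blast
            have aU: "a \<in> U" "{a, v} \<in> E" using N by blast+
            have va: "v \<noteq> a" using simple_edge_neq[OF sg aU(2)] by simp
            have vb: "v \<noteq> b" using simple_edge_neq[OF sg b(2)] by simp
            show ?thesis
            proof (cases "t b \<ge> 2")
              case True
              obtain X' where "sol E k (U - {v, a}) t w X'"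
                using IH[of "U - {v, a}" t w] v winv_sub[OF inv] by blast
              then show ?thesis using stepD1[where t=t and w=w, OF fU v(1,2) aU(1) b(1) N(2) va vb N(1) _ True inv] b
                by (metis order_refl)
            next
              case False
              then have tb: "t b = 1" using t1 b by force
              have "winv k (U - {v, b}) (t(a := t a - 1)) (w(a := w a + 1))"
                using inv unfolding winv_def by auto
              then obtain X' where "sol E k (U - {v, b}) (t(a := t a - 1)) (w(a := w a + 1)) X'"
                using IH[of "U - {v, b}"] v by blast
              then show ?thesis using stepD2[where t=t and w=w, OF fU k v(1,2) aU(1) b(1) N(2) va vb N(1) tb inv] by blast
            qed
          qed
          show ?thesis
          proof (cases "\<exists>v\<in>U. t v = 1 \<and> dg E U v = 2 \<and> (\<exists>b\<in>U. {b, v} \<in> E \<and> dg E U b = 2)")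
            case True
            then show ?thesis using caseD by blast
          next
            case nD: False
            obtain S c where pe: "pendant E U S c" and Sd: "\<forall>s\<in>S. dg E U s \<le> 2"
              using SL[OF sg gd less.prems(1) Une d2] by blast
            have SU: "S \<subseteq> U" "S \<noteq> {}" "c \<in> U" "c \<notin> S"
              and clo: "\<And>s u. s \<in> S \<Longrightarrow> u \<in> U \<Longrightarrow> {u, s} \<in> E \<Longrightarrow> u \<in> S \<or> u = c"
              using pe unfolding pendant_def by auto
            have St: "\<forall>s\<in>S. t s \<ge> 2"
            proof
              fix s assume s: "s \<in> S"
              show "t s \<ge> 2"
              proof (rule ccontr)
                assume "\<not> t s \<ge> 2"
                then have ts: "t s = 1" using t1 s SU by force
                have ds: "dg E U s = 2" using Sd d2 s SU by force
                then have "{x \<in> U. {x, s} \<in> E} \<noteq> {c}" unfolding dg_def by force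
                moreover have "{x \<in> U. {x, s} \<in> E} \<noteq> {}" using ds unfolding dg_def by force
                ultimately obtain b where b: "b \<in> U" "{b, s} \<in> E" "b \<noteq> c" by blast
                then have "b \<in> S" using clo[OF s] by blast
                then have "dg E U b = 2" using Sd d2 SU by force
                then show False using nD s SU ts ds b by blast
              qed
            qed
            define m where "m = card {x \<in> S. {x, c} \<in> E}"
            have fS: "finite S" using fU SU by (meson finite_subset)
            have "m \<le> card S" unfolding m_def using fS by (intro card_mono) auto
            also have "card S = sum (\<lambda>_. 1) S" by simp
            also have "\<dots> \<le> sum w S" using inv SU unfolding winv_def by (intro sum_mono) auto
            finally have mS: "m \<le> sum w S" .
            have "winv k (U - S) (t(c := t c - int m)) (w(c := w c + sum w S))"
            proof -
              have "int k + 1 - t c \<le> int (w c)" "1 \<le> w c" using inv SU unfolding winv_def by auto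
              moreover have "int m \<le> int (sum w S)" using mS by (simp only: of_nat_le_iff)
              ultimately have "int k + 1 - (t c - int m) \<le> int (w c) + int (sum w S)" by linarith
              then have "int k + 1 - (t c - int m) \<le> int (w c + sum w S)" by (simp only: of_nat_add)
              then show ?thesis using inv SU \<open>1 \<le> w c\<close> unfolding winv_def by auto
            qed
            then obtain X' where "sol E k (U - S) (t(c := t c - int m)) (w(c := w c + sum w S)) X'"
              using IH[of "U - S"] SU by blast
            then show ?thesis using stepE[where t=t and w=w, OF fU pe] St Sd unfolding m_def by blast
          qed
        qed
      qed
    qed
  qed
qed

lemma ceil_facts:
  fixes k j :: nat
  assumes "k \<ge> 1" "j \<ge> 2"
  shows "j - 1 \<le> k * nat \<lceil>real (j - 1) / real k\<rceil>" "nat \<lceil>real (j - 1) / real k\<rceil> \<ge> 1"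
proof -
  define x where "x = real (j - 1) / real k"
  have xp: "x > 0" using assms unfolding x_def by simp
  have "x \<le> of_int \<lceil>x\<rceil>" by (rule le_of_int_ceiling)
  moreover have "\<lceil>x\<rceil> \<ge> 0" using xp by simp
  ultimately have "x \<le> real (nat \<lceil>x\<rceil>)" by simp
  moreover have kp: "real k > 0" using assms by simp
  ultimately have "real (j - 1) \<le> real (nat \<lceil>x\<rceil>) * real k" unfolding x_def
    using pos_divide_le_eq[OF kp] by blast
  then have "real (j - 1) \<le> real (k * nat \<lceil>x\<rceil>)" by (simp add: mult.commute)
  then show "j - 1 \<le> k * nat \<lceil>real (j - 1) / real k\<rceil>" unfolding x_def by (simp only: of_nat_le_iff)
  have "\<lceil>x\<rceil> \<ge> 1" using xp by (simp add: one_le_ceiling)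
  then have "nat \<lceil>x\<rceil> \<ge> 1" by linarith
  then show "nat \<lceil>real (j - 1) / real k\<rceil> \<ge> 1" unfolding x_def .
qed

lemma upper_sparse:
  fixes k j N :: nat and E :: "nat set set"
  assumes k: "k \<ge> 2" and j: "j \<ge> k + 2" and N: "N = j - 1 + nat \<lceil>real (j - 1) / real k\<rceil>"
    and ca: "cactus {..<N} E"
  shows "\<exists>S. card S = j \<and> k_sparse {..<N} E k S"
proof -
  define c where "c = nat \<lceil>real (j - 1) / real k\<rceil>"
  have c: "j - 1 \<le> k * c" "c \<ge> 1" using ceil_facts[of k j] k j unfolding c_def by auto
  have sg: "simple_graph {..<N} E" using ca unfolding cactus_def by simp
  have gd: "good {..<N} E" using ca by (rule cactus_good)
  have "winv k {..<N} (\<lambda>_. int k) (\<lambda>_. 1)" unfolding winv_def by simp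
  then obtain X where X: "sol E k {..<N} (\<lambda>_. int k) (\<lambda>_. 1) X"
    using mainL[OF sg gd k] by blast
  have XV: "X \<subseteq> {..<N}" and deg: "\<forall>v\<in>{..<N} - X. dg E ({..<N} - X) v \<le> k"
    and cnt: "X = {} \<or> (k + 1) * card X < N"
    using X unfolding sol_def by auto
  have cX: "card X < c"
  proof (cases "X = {}")
    case True then show ?thesis using c by simp
  next
    case False
    then have "(k + 1) * card X < N" using cnt by simp
    also have "N \<le> (k + 1) * c" using N c unfolding c_def by simp
    finally have lt: "(k + 1) * card X < (k + 1) * c" .
    show ?thesis
    proof (rule ccontr)
      assume "\<not> card X < c"
      then have "c \<le> card X" by simp
      then have "(k + 1) * c \<le> (k + 1) * card X" by (rule mult_le_mono2)
      then show False using lt by simp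
    qed
  qed
  have fX: "finite X" using XV finite_subset by blast
  have "card ({..<N} - X) = N - card X" using XV fX by (simp add: card_Diff_subset)
  moreover have "N = j - 1 + c" using N unfolding c_def by simp
  ultimately have "card ({..<N} - X) \<ge> j" using cX j by linarith
  then obtain S where S: "S \<subseteq> {..<N} - X" "card S = j"
    by (meson obtain_subset_with_card_n)
  have "k_sparse {..<N} E k S"
    unfolding k_sparse_def
  proof (intro conjI ballI)
    show "S \<subseteq> {..<N}" using S by auto
    fix v assume v: "v \<in> S"
    have "card {u \<in> S. {u, v} \<in> E} \<le> dg E ({..<N} - X) v"
      unfolding dg_def using S by (intro card_mono) auto
    then show "card {u \<in> S. {u, v} \<in> E} \<le> k" using deg v S by force
  qed
  then show ?thesis using S by blast
qed


definition starE :: "nat \<Rightarrow> nat \<Rightarrow> nat set set" where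
  "starE m s = {{a, b} | a b. a < s * m \<and> b < s * m \<and> a div m = b div m \<and> a mod m = 0 \<and> b mod m \<noteq> 0}"

lemma starE_cases:
  assumes "{x, y} \<in> starE m s"
  shows "x div m = y div m \<and> x < s * m \<and> y < s * m \<and>
    ((x mod m = 0 \<and> y mod m \<noteq> 0) \<or> (y mod m = 0 \<and> x mod m \<noteq> 0))"
proof -
  have "\<exists>a b. {x, y} = {a, b} \<and> a < s * m \<and> b < s * m \<and> a div m = b div m \<and> a mod m = 0 \<and> b mod m \<noteq> 0"
    using assms unfolding starE_def by (simp only: mem_Collect_eq)
  then show ?thesis
  proof (elim exE conjE)
    fix a b assume ab: "{x, y} = {a, b}" "a < s * m" "b < s * m" "a div m = b div m" "a mod m = 0" "b mod m \<noteq> 0"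
    then have "(x = a \<and> y = b) \<or> (x = b \<and> y = a)" by (simp add: doubleton_eq_iff)
    then show ?thesis
    proof
      assume "x = a \<and> y = b" then show ?thesis using ab(2-6) by simp
    next
      assume "x = b \<and> y = a" then show ?thesis using ab(2-6) by simp
    qed
  qed
qed
lemma starE_leaf:
  assumes "{x, y} \<in> starE m s" "x mod m \<noteq> 0"
  shows "y = (x div m) * m"
proof -
  have h: "x div m = y div m" "y mod m = 0" using starE_cases[OF assms(1)] assms(2) by auto
  have "y = (y div m) * m + y mod m" by simp
  then show ?thesis using h by simp
qed

lemma starE_in:
  assumes "i < s" "1 \<le> l" "l < m"
  shows "{i * m, i * m + l} \<in> starE m s"
proof -
  have "i * m + l < s * m"
  proof -
    have "i * m + l < i * m + m" using assms by simp
    also have "\<dots> = (i + 1) * m" by simp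
    also have "\<dots> \<le> s * m" using assms by (intro mult_le_mono1) simp
    finally show ?thesis .
  qed
  moreover have "i * m < s * m" using assms by simp
  moreover have "(i * m) div m = (i * m + l) div m" using assms by simp
  moreover have "(i * m + l) mod m \<noteq> 0" using assms by simp
  ultimately have "\<exists>a b. {i * m, i * m + l} = {a, b} \<and> a < s * m \<and> b < s * m \<and>
      a div m = b div m \<and> a mod m = 0 \<and> b mod m \<noteq> 0"
    by (intro exI[of _ "i * m"] exI[of _ "i * m + l"]) simp
  then show ?thesis unfolding starE_def by (simp only: mem_Collect_eq)
qed

lemma rtr_step:
  assumes "(p, q) \<in> R\<^sup>*" "p \<noteq> q" shows "\<exists>u. (p, u) \<in> R"
  using assms(1)
proof (cases rule: converse_rtranclE)
  case base then show ?thesis using assms(2) by simp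
next
  case (step u) then show ?thesis by blast
qed

lemma starE_div_inv:
  assumes "(x, y) \<in> (adj_rel F)\<^sup>*" "F \<subseteq> starE m s" shows "x div m = y div m"
  using assms(1)
proof (induction rule: rtrancl_induct)
  case base then show ?case by simp
next
  case (step y z)
  then have "{y, z} \<in> starE m s" using assms(2) by auto
  then have "y div m = z div m" using starE_cases by blast
  then show ?case using step by simp
qed

lemma starE_edge:
  assumes "e \<in> starE m s"
  shows "\<exists>a b. e = {a, b} \<and> a \<noteq> b \<and> a < s * m \<and> b < s * m"
proof -
  have "\<exists>a b. e = {a, b} \<and> a < s * m \<and> b < s * m \<and> a div m = b div m \<and> a mod m = 0 \<and> b mod m \<noteq> 0"
    using assms unfolding starE_def by (simp only: mem_Collect_eq)
  then show ?thesis
  proof (elim exE conjE)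
    fix a b assume "e = {a, b}" "a < s * m" "b < s * m" "a mod m = 0" "b mod m \<noteq> 0"
    then show ?thesis by (intro exI[of _ a] exI[of _ b]) auto
  qed
qed

lemma star_simple:
  assumes "s * m \<le> n" shows "simple_graph {..<n} (starE m s)"
  unfolding simple_graph_def
proof (intro conjI subsetI)
  fix e assume "e \<in> starE m s"
  then obtain a b where "e = {a, b}" "a \<noteq> b" "a < s * m" "b < s * m" using starE_edge by blast
  moreover then have "a < n" "b < n" using assms by linarith+
  ultimately show "e \<in> {e. \<exists>u v. u \<in> {..<n} \<and> v \<in> {..<n} \<and> u \<noteq> v \<and> e = {u, v}}"
    by (intro CollectI exI[of _ a] exI[of _ b]) simp
qed simp

lemma star_le2:
  assumes sgr: "subgraph W F {..<n} (starE m s)" and ns: "nonseparable W F" and m: "m > 0"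
  shows "card W \<le> 2"
proof (rule ccontr)
  assume "\<not> card W \<le> 2"
  then have "card W \<ge> 3" by simp
  have fW: "finite W" using sgr unfolding subgraph_def by (meson finite_lessThan finite_subset)
  obtain T where T: "T \<subseteq> W" "card T = 3" using \<open>card W \<ge> 3\<close> by (meson obtain_subset_with_card_n)
  then obtain x y z where xyz: "T = {x, y, z}" "x \<noteq> y" "y \<noteq> z" "x \<noteq> z" by (meson card_3_iff)
  have inW: "x \<in> W" "y \<in> W" "z \<in> W" using T xyz by auto
  have Fs: "F \<subseteq> starE m s" and FW: "\<forall>e\<in>F. e \<subseteq> W" using sgr unfolding subgraph_def by auto
  have conn: "\<And>a b. a \<in> W \<Longrightarrow> b \<in> W \<Longrightarrow> (a, b) \<in> (adj_rel F)\<^sup>*"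
    using ns unfolding nonseparable_def connected_graph_def by blast
  define C where "C = (x div m) * m"
  have dv: "\<And>a. a \<in> W \<Longrightarrow> a div m = x div m" using starE_div_inv[OF conn Fs] inW by metis
  have md: "\<And>a. a \<in> W \<Longrightarrow> a \<noteq> C \<Longrightarrow> a mod m \<noteq> 0"
  proof -
    fix a assume a: "a \<in> W" "a \<noteq> C"
    show "a mod m \<noteq> 0"
    proof
      assume "a mod m = 0"
      moreover have "a = (a div m) * m + a mod m" by simp
      ultimately show False using a dv[OF a(1)] C_def by simp
    qed
  qed
  obtain p q where pq: "p \<in> W" "q \<in> W" "p \<noteq> q" "p \<noteq> C" "q \<noteq> C"
  proof (cases "x = C")
    case True then show ?thesis using that[of y z] inW xyz by auto
  next
    case False
    show ?thesis
    proof (cases "y = C")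
      case True then show ?thesis using that[of x z] inW xyz False by auto
    next
      case False then show ?thesis using that[of x y] inW xyz \<open>x \<noteq> C\<close> by auto
    qed
  qed
  define F' where "F' = {e \<in> F. C \<notin> e}"
  have r: "(p, q) \<in> (adj_rel F')\<^sup>*"
  proof (cases "C \<in> W")
    case True
    then have "connected_graph (W - {C}) F'" using ns unfolding nonseparable_def F'_def by blast
    then show ?thesis using pq unfolding connected_graph_def by blast
  next
    case False
    then have "F' = F" using FW unfolding F'_def by auto
    then show ?thesis using conn pq by simp
  qed
  obtain u where "(p, u) \<in> adj_rel F'" using rtr_step[OF r pq(3)] by blast
  then have e: "{p, u} \<in> F'" by simp
  then have "{p, u} \<in> starE m s" using Fs F'_def by auto
  then have "u = (p div m) * m" using starE_leaf md[OF pq(1) pq(4)] by blast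
  then have "u = C" using dv[OF pq(1)] C_def by simp
  then show False using e F'_def by simp
qed

lemma star_cactus:
  assumes "s * m \<le> n" "m > 0" shows "cactus {..<n} (starE m s)"
  unfolding cactus_def
proof (intro conjI allI impI)
  show "simple_graph {..<n} (starE m s)" using assms(1) by (rule star_simple)
  fix W F assume blk: "is_block {..<n} (starE m s) W F"
  then have sgr: "subgraph W F {..<n} (starE m s)" and ns: "nonseparable W F" unfolding is_block_def by auto
  have le2: "card W \<le> 2" using star_le2[OF sgr ns assms(2)] .
  have fW: "finite W" using sgr unfolding subgraph_def by (meson finite_lessThan finite_subset)
  have Wne: "W \<noteq> {}" using ns unfolding nonseparable_def by simp
  have Fs: "F \<subseteq> starE m s" and FW: "\<forall>e\<in>F. e \<subseteq> W" using sgr unfolding subgraph_def by auto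
  have conn: "\<And>a b. a \<in> W \<Longrightarrow> b \<in> W \<Longrightarrow> (a, b) \<in> (adj_rel F)\<^sup>*"
    using ns unfolding nonseparable_def connected_graph_def by blast
  have "card W \<noteq> 0" using fW Wne by simp
  then consider "card W = 1" | "card W = 2" using le2 by linarith
  then show "is_cycle_graph W F \<or> is_single_edge W F \<or> is_single_vertex W F"
  proof cases
    case 1
    then obtain w where w: "W = {w}" by (meson card_1_singletonE)
    have "F = {}"
    proof (rule ccontr)
      assume "F \<noteq> {}"
      then obtain e where e: "e \<in> F" by blast
      then obtain a b where ab: "e = {a, b}" "a \<noteq> b" using Fs starE_edge by blast
      then have "a \<in> W" "b \<in> W" using FW e by auto
      then show False using w ab(2) by simp
    qed
    then show ?thesis using 1 unfolding is_single_vertex_def by simp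
  next
    case 2
    have "\<exists>p q. W = {p, q} \<and> p \<noteq> q" using 2 by (simp add: card_2_iff)
    then obtain p q where pq: "W = {p, q}" "p \<noteq> q" by (elim exE conjE) (rule that)
    have "p \<in> W" "q \<in> W" using pq by simp_all
    then have "(p, q) \<in> (adj_rel F)\<^sup>*" by (rule conn)
    from rtr_step[OF this pq(2)] obtain u where "(p, u) \<in> adj_rel F" by blast
    then have e: "{p, u} \<in> F" "u \<noteq> p" by auto
    then have "u \<in> W" using FW by auto
    then have "u = q" using pq(1) e(2) by simp
    then have WF: "W \<in> F" using e pq by simp
    have "F \<subseteq> {W}"
    proof
      fix e assume e: "e \<in> F"
      then obtain a b where ab: "e = {a, b}" "a \<noteq> b" using Fs starE_edge by blast
      then have "a \<in> W" "b \<in> W" using FW e by auto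
      then have "a \<in> {p, q}" "b \<in> {p, q}" using pq by auto
      then have "e = W" using ab pq by (cases "a = p") (simp_all add: insert_commute)
      then show "e \<in> {W}" by simp
    qed
    then have "F = {W}" using WF by blast
    then show ?thesis using 2 unfolding is_single_edge_def by simp
  qed
qed

lemma star_nodense:
  assumes m: "m = k + 2" and S: "card S = k + 3"
  shows "\<not> k_dense {..<n} (starE m s) k S"
proof
  assume kd: "k_dense {..<n} (starE m s) k S"
  have fS: "finite S" using S by (intro card_ge_0_finite) simp
  have mp: "m > 0" using m by simp
  define N where "N = (\<lambda>v. {u \<in> S. {u, v} \<in> starE m s})"
  have "\<exists>v\<in>S. card (N v) \<le> 1"
  proof (cases "\<exists>v\<in>S. v mod m \<noteq> 0")
    case True
    then obtain v where v: "v \<in> S" "v mod m \<noteq> 0" by blast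
    have "N v \<subseteq> {(v div m) * m}"
    proof
      fix u assume "u \<in> N v"
      then have "{v, u} \<in> starE m s" unfolding N_def by (simp add: insert_commute)
      then show "u \<in> {(v div m) * m}" using starE_leaf v(2) by simp
    qed
    then have "card (N v) \<le> card {(v div m) * m}" by (intro card_mono) auto
    then show ?thesis using v by auto
  next
    case False
    have "S \<noteq> {}" using S by auto
    then obtain v where v: "v \<in> S" by blast
    have "N v = {}"
    proof (rule ccontr)
      assume "N v \<noteq> {}"
      then obtain u where u: "u \<in> S" "{u, v} \<in> starE m s" unfolding N_def by blast
      then show False using starE_cases[OF u(2)] False v by auto
    qed
    then have "card (N v) \<le> 1" by simp
    then show ?thesis using v by blast
  qed
  then obtain v where v: "v \<in> S" "card (N v) \<le> 1" by blast
  have D: "{u \<in> S. u \<noteq> v \<and> {u, v} \<notin> starE m s} = (S - {v}) - N v" unfolding N_def by auto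
  have "card (S - {v}) - card (N v) \<le> card ((S - {v}) - N v)"
    by (rule diff_card_le_card_Diff) (simp add: N_def fS)
  moreover have "card (S - {v}) = k + 2" using S v fS by simp
  ultimately have "card {u \<in> S. u \<noteq> v \<and> {u, v} \<notin> starE m s} \<ge> k + 1" using D v by simp
  moreover have "card {u \<in> S. u \<noteq> v \<and> {u, v} \<notin> starE m s} \<le> k" using kd v unfolding k_dense_def by blast
  ultimately show False by simp
qed

lemma star_nosparse:
  assumes m: "m = k + 2" and S: "card S = j" and SV: "S \<subseteq> {..<n}"
    and s: "s \<ge> 1" "n - j + 1 = s" "s * m \<le> n"
  shows "\<not> k_sparse {..<n} (starE m s) k S"
proof
  assume ks: "k_sparse {..<n} (starE m s) k S"
  have mp: "m > 0" using m by simp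
  have "\<exists>i<s. \<forall>l<m. i * m + l \<in> S"
  proof (rule ccontr)
    assume "\<not> (\<exists>i<s. \<forall>l<m. i * m + l \<in> S)"
    then have ex: "\<forall>i<s. \<exists>l. l < m \<and> i * m + l \<notin> S" by auto
    define f where "f = (\<lambda>i. i * m + (SOME l. l < m \<and> i * m + l \<notin> S))"
    have fp: "\<And>i. i < s \<Longrightarrow> (SOME l. l < m \<and> i * m + l \<notin> S) < m \<and> f i \<notin> S"
    proof -
      fix i assume "i < s"
      then have "\<exists>l. l < m \<and> i * m + l \<notin> S" using ex by blast
      then show "(SOME l. l < m \<and> i * m + l \<notin> S) < m \<and> f i \<notin> S"
        unfolding f_def by (rule someI_ex)
    qed
    have fdiv: "\<And>i. i < s \<Longrightarrow> f i div m = i" using fp mp unfolding f_def by simp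
    have inj: "inj_on f {..<s}"
      by (rule inj_onI) (metis fdiv lessThan_iff)
    have "f ` {..<s} \<subseteq> {..<n} - S"
    proof
      fix x assume "x \<in> f ` {..<s}"
      then obtain i where i: "i < s" "x = f i" by blast
      have "f i < i * m + m" using fp[OF i(1)] unfolding f_def by simp
      also have "\<dots> = (i + 1) * m" by simp
      also have "\<dots> \<le> s * m" using i by (intro mult_le_mono1) simp
      finally have "f i < n" using s by simp
      then show "x \<in> {..<n} - S" using fp[OF i(1)] i by simp
    qed
    then have "card (f ` {..<s}) \<le> card ({..<n} - S)" by (intro card_mono) auto
    moreover have "card (f ` {..<s}) = s" using inj by (simp add: card_image)
    moreover have "card ({..<n} - S) = n - j" using SV S by (simp add: card_Diff_subset finite_subset)
    ultimately show False using s by simp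
  qed
  then obtain i where i: "i < s" "\<forall>l<m. i * m + l \<in> S" by blast
  have vS: "i * m \<in> S" using i(2) mp by (metis add_0_right)
  have "(\<lambda>l. i * m + l) ` {1..<m} \<subseteq> {u \<in> S. {u, i * m} \<in> starE m s}"
  proof
    fix x assume "x \<in> (\<lambda>l. i * m + l) ` {1..<m}"
    then obtain l where l0: "l \<in> {1..<m}" "x = i * m + l" by (rule imageE)
    then have l: "1 \<le> l" "l < m" "x = i * m + l" by auto
    have "{i * m, i * m + l} \<in> starE m s" using starE_in[OF i(1) l(1) l(2)] .
    then show "x \<in> {u \<in> S. {u, i * m} \<in> starE m s}" using l i(2) by (simp add: insert_commute)
  qed
  then have "card ((\<lambda>l. i * m + l) ` {1..<m}) \<le> card {u \<in> S. {u, i * m} \<in> starE m s}"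
    using SV by (intro card_mono) (auto intro: finite_subset)
  moreover have "card ((\<lambda>l. i * m + l) ` {1..<m}) = m - 1" by (simp add: card_image)
  moreover have "card {u \<in> S. {u, i * m} \<in> starE m s} \<le> k" using ks vS unfolding k_sparse_def by blast
  ultimately show False using m by simp
qed

theorem corollary4p2:
  fixes k j :: nat
  assumes "k \<ge> 4" and "j \<ge> k + 2"
  shows "j + (j - 1) div (k + 1) \<le> R_cactus k (k + 3) j \<and>
         R_cactus k (k + 3) j \<le> j - 1 + nat \<lceil>real (j - 1) / real k\<rceil>"
proof -
  define P where "P = (\<lambda>n. \<forall>E :: nat set set. cactus {..<n} E \<longrightarrow>
      (\<exists>S. card S = k + 3 \<and> k_dense {..<n} E k S) \<or> (\<exists>S. card S = j \<and> k_sparse {..<n} E k S))"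
  have R: "R_cactus k (k + 3) j = (LEAST n. P n)" unfolding R_cactus_def P_def by simp
  define N where "N = j - 1 + nat \<lceil>real (j - 1) / real k\<rceil>"
  have k2: "k \<ge> 2" using assms by simp
  have PN: "P N" unfolding P_def using upper_sparse[OF k2 assms(2) N_def] by blast
  have up: "(LEAST n. P n) \<le> N" using PN by (rule Least_le)
  have notP: "\<not> P n" if n: "n < j + (j - 1) div (k + 1)" for n
  proof
    assume Pn: "P n"
    define s where "s = n + 1 - j"
    define m where "m = k + 2"
    define q where "q = (j - 1) div (k + 1)"
    have sm: "s * m \<le> n"
    proof (cases "n < j")
      case True then show ?thesis unfolding s_def by simp
    next
      case False
      have sq: "s \<le> q" using n False unfolding s_def q_def by simp
      have qk: "q * (k + 1) \<le> j - 1" unfolding q_def by (rule div_times_less_eq_dividend)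
      have "s * m = s * (k + 1) + s" unfolding m_def by simp
      also have "\<dots> \<le> q * (k + 1) + s"
      proof -
        have "s * (k + 1) \<le> q * (k + 1)" using sq by (rule mult_le_mono1)
        then show ?thesis by (rule add_right_mono)
      qed
      also have "\<dots> \<le> n" using qk False assms(2) unfolding s_def by arith
      finally show ?thesis .
    qed
    have mp: "m > 0" unfolding m_def by simp
    have ca: "cactus {..<n} (starE m s)" using star_cactus[OF sm mp] .
    then have "(\<exists>S. card S = k + 3 \<and> k_dense {..<n} (starE m s) k S) \<or>
        (\<exists>S. card S = j \<and> k_sparse {..<n} (starE m s) k S)" using Pn unfolding P_def by blast
    then show False
    proof
      assume "\<exists>S. card S = k + 3 \<and> k_dense {..<n} (starE m s) k S"
      then show False using star_nodense[OF m_def] by blast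
    next
      assume "\<exists>S. card S = j \<and> k_sparse {..<n} (starE m s) k S"
      then obtain S where S: "card S = j" "k_sparse {..<n} (starE m s) k S" by blast
      have SV: "S \<subseteq> {..<n}" using S unfolding k_sparse_def by simp
      then have "j \<le> n" using S card_mono[OF finite_lessThan SV] by simp
      then have "s \<ge> 1" "n - j + 1 = s" unfolding s_def using assms by auto
      then show False using star_nosparse[OF m_def S(1) SV _ _ sm] S(2) by blast
    qed
  qed
  have low: "j + (j - 1) div (k + 1) \<le> (LEAST n. P n)"
  proof (rule ccontr)
    assume "\<not> j + (j - 1) div (k + 1) \<le> (LEAST n. P n)"
    then have "(LEAST n. P n) < j + (j - 1) div (k + 1)" by simp
    moreover have "P (LEAST n. P n)" using PN by (rule LeastI)
    ultimately show False using notP by blast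
  qed
  show ?thesis using R up low N_def by simp
qed

end
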